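(* Let $G$ be a finite group and $n\ge 1$ an integer. If there exists a $2$-starter under $G$ (i.e. in $K_{\overline{G}}$), then there exists a $2n$-starter under $G\times\mathbb{Z}_n$ (i.e. in $K_{\overline{G\times\mathbb{Z}_n}}$).
   Context: For a finite group $G$, $\overline{G}=G\cup\{\infty\}$, and $K_V$ denotes the complete graph on vertex set $V$. $G$ acts on $\overline{G}$ by right multiplication, with $\infty g=\infty$; for a subgraph $F$ of $K_{\overline{G}}$ and $g\in G$, $Fg$ is the graph obtained by replacing every vertex $v$ by $vg$, and the $G$-stabilizer of $F$ is $\{g\in G: Fg=F\}$. A $k$-factor of $K_V$ is a spanning $k$-regular subgraph. For a graph $\Gamma$ with vertex set $\overline{G}$, its list of differences is the multiset $\Delta\Gamma=\{ab^{-1},\ ba^{-1} : [a,b]\in E(\Gamma),\ a\neq\infty\neq b\}$. Given a finite group $G$ with $k$ dividing $|G|$, a $k$-factor $F$ of $K_{\overline{G}}$ is a $k$-starter under $G$ if (1) the $G$-stabilizer of $F$ has order $k$, and (2) $\Delta F$ contains every element of $G\setminus\{1_G\}$. In $G\times\mathbb{Z}_n$ the group operation is $(g,i)(h,j)=(gh,i+j)$. *)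

theory Defs
  imports "HOL-Algebra.Elementary_Groups"
begin

text \<open>The extended vertex set G-bar = G with an extra point infinity; infinity is None.\<close>
definition bar :: "('a, 'b) monoid_scheme \<Rightarrow> 'a option set" where
  "bar G = insert None (Some ` carrier G)"

definition is_factor :: "nat \<Rightarrow> 'v set \<Rightarrow> 'v set set \<Rightarrow> bool" where
  "is_factor k V E \<longleftrightarrow>
     E \<subseteq> {e. \<exists>a b. a \<in> V \<and> b \<in> V \<and> a \<noteq> b \<and> e = {a, b}} \<and>
     (\<forall>v\<in>V. card {e \<in> E. v \<in> e} = k)"

definition act :: "('a, 'b) monoid_scheme \<Rightarrow> 'a \<Rightarrow> 'a option \<Rightarrow> 'a option" where
  "act G g v = map_option (\<lambda>a. a \<otimes>\<^bsub>G\<^esub> g) v"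

definition stab :: "('a, 'b) monoid_scheme \<Rightarrow> 'a option set set \<Rightarrow> 'a set" where
  "stab G E = {g \<in> carrier G. (\<lambda>e. act G g ` e) ` E = E}"

text \<open>Underlying set of the list of differences.\<close>
definition diffs :: "('a, 'b) monoid_scheme \<Rightarrow> 'a option set set \<Rightarrow> 'a set" where
  "diffs G E = {x. \<exists>a b. {Some a, Some b} \<in> E \<and> a \<noteq> b \<and>
                  (x = a \<otimes>\<^bsub>G\<^esub> inv\<^bsub>G\<^esub> b \<or> x = b \<otimes>\<^bsub>G\<^esub> inv\<^bsub>G\<^esub> a)}"

definition starter :: "('a, 'b) monoid_scheme \<Rightarrow> nat \<Rightarrow> 'a option set set \<Rightarrow> bool" where
  "starter G k F \<longleftrightarrow> k dvd order G \<and> is_factor k (bar G) F \<and>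
     card (stab G F) = k \<and> carrier G - {\<one>\<^bsub>G\<^esub>} \<subseteq> diffs G F"

end

theory Submission
  imports Defs
begin

lemma act_act_inv:
  assumes "group G" "g \<in> carrier G" "x \<in> bar G"
  shows "act G (inv\<^bsub>G\<^esub> g) (act G g x) = x"
proof -
  interpret group G by fact
  show ?thesis using assms by (cases x) (auto simp: act_def bar_def m_assoc)
qed

lemma img_inv:
  assumes "group G" "g \<in> carrier G" "\<forall>e\<in>E. e \<subseteq> bar G"
  shows "(\<lambda>e. act G (inv\<^bsub>G\<^esub> g) ` e) ` ((\<lambda>e. act G g ` e) ` E) = E"
proof -
  have "\<And>e. e \<in> E \<Longrightarrow> act G (inv\<^bsub>G\<^esub> g) ` act G g ` e = e"
  proof -
    fix e assume "e \<in> E"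
    hence "e \<subseteq> bar G" using assms by auto
    hence "\<And>x. x \<in> e \<Longrightarrow> act G (inv\<^bsub>G\<^esub> g) (act G g x) = x"
      using act_act_inv[OF assms(1,2)] by auto
    thus "act G (inv\<^bsub>G\<^esub> g) ` act G g ` e = e"
      by (simp add: image_image)
  qed
  thus ?thesis by (simp add: image_image)
qed

lemma stab_inv:
  assumes "group G" "\<forall>e\<in>E. e \<subseteq> bar G" "g \<in> stab G E"
  shows "inv\<^bsub>G\<^esub> g \<in> stab G E"
proof -
  have g: "g \<in> carrier G" and eq: "(\<lambda>e. act G g ` e) ` E = E" using assms(3) by (auto simp: stab_def)
  have "(\<lambda>e. act G (inv\<^bsub>G\<^esub> g) ` e) ` E = E"
    using img_inv[OF assms(1) g assms(2)] eq by simp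
  thus ?thesis using g assms(1) by (simp add: stab_def group.inv_closed)
qed

lemma stabI:
  assumes "group G" "\<forall>e\<in>E. e \<subseteq> bar G" "g \<in> carrier G"
    "\<forall>e\<in>E. act G g ` e \<in> E" "\<forall>e\<in>E. act G (inv\<^bsub>G\<^esub> g) ` e \<in> E"
  shows "g \<in> stab G E"
proof -
  have s1: "(\<lambda>e. act G g ` e) ` E \<subseteq> E" using assms(4) by auto
  have s2: "(\<lambda>e. act G (inv\<^bsub>G\<^esub> g) ` e) ` E \<subseteq> E" using assms(5) by auto
  have ig: "inv\<^bsub>G\<^esub> g \<in> carrier G" using assms by (simp add: group.inv_closed)
  have "E = (\<lambda>e. act G g ` e) ` ((\<lambda>e. act G (inv\<^bsub>G\<^esub> g) ` e) ` E)"
    using img_inv[OF assms(1) ig assms(2)] assms(1,3) by (simp add: group.inv_inv)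
  also have "\<dots> \<subseteq> (\<lambda>e. act G g ` e) ` E" using s2 by (rule image_mono)
  finally have "(\<lambda>e. act G g ` e) ` E = E" using s1 by auto
  thus ?thesis using assms(3) by (simp add: stab_def)
qed

lemma deg_eq:
  assumes "\<forall>e\<in>E. \<exists>a b. e = {a, b}"
  shows "card {e \<in> E. v \<in> e} = card {u. {v, u} \<in> E}"
proof -
  have "{e \<in> E. v \<in> e} = (\<lambda>u. {v, u}) ` {u. {v, u} \<in> E}"
  proof
    show "{e \<in> E. v \<in> e} \<subseteq> (\<lambda>u. {v, u}) ` {u. {v, u} \<in> E}"
    proof
      fix e assume "e \<in> {e \<in> E. v \<in> e}"
      then obtain a b where "e = {a,b}" "e \<in> E" "v \<in> e" using assms by auto
      show "e \<in> (\<lambda>u. {v, u}) ` {u. {v, u} \<in> E}"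
      proof (cases "v = a")
        case True thus ?thesis using \<open>e = {a,b}\<close> \<open>e \<in> E\<close> by auto
      next
        case False
        hence "v = b" using \<open>e = {a,b}\<close> \<open>v \<in> e\<close> by auto
        thus ?thesis using \<open>e = {a,b}\<close> \<open>e \<in> E\<close> by (auto simp: insert_commute)
      qed
    qed
  qed auto
  moreover have "inj_on (\<lambda>u. {v, u}) {u. {v, u} \<in> E}"
    by (auto simp: inj_on_def doubleton_eq_iff)
  ultimately show ?thesis by (simp add: card_image)
qed


fun adjL :: "'a option set set \<Rightarrow> int set \<Rightarrow> ('a \<times> int) option \<Rightarrow> ('a \<times> int) option \<Rightarrow> bool" where
  "adjL F Z None None = False"
| "adjL F Z None (Some (b, j)) = ({None, Some b} \<in> F \<and> j \<in> Z)"
| "adjL F Z (Some (a, i)) None = ({None, Some a} \<in> F \<and> i \<in> Z)"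
| "adjL F Z (Some (a, i)) (Some (b, j)) = (i \<in> Z \<and> j \<in> Z \<and>
     ({Some a, Some b} \<in> F \<or> (a = b \<and> i \<noteq> j \<and> {None, Some a} \<in> F)))"

lemma adjL_sym: "adjL F Z x y \<Longrightarrow> adjL F Z y x"
  by (cases x; cases y) (auto simp: insert_commute)

definition liftF :: "'a option set set \<Rightarrow> int set \<Rightarrow> ('a \<times> int) option set set" where
  "liftF F Z = {{x, y} | x y. adjL F Z x y}"

lemma mem_liftF: "{x, y} \<in> liftF F Z \<longleftrightarrow> adjL F Z x y"
  unfolding liftF_def by (auto simp: doubleton_eq_iff dest: adjL_sym)

lemma deg_liftF: "card {e \<in> liftF F Z. v \<in> e} = card {u. adjL F Z v u}"
proof -
  have "\<forall>e\<in>liftF F Z. \<exists>a b. e = {a, b}" unfolding liftF_def by auto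
  from deg_eq[OF this] show ?thesis by (simp add: mem_liftF)
qed

lemma opair_cases: "(u = None \<Longrightarrow> P) \<Longrightarrow> (\<And>b j. u = Some (b, j) \<Longrightarrow> P) \<Longrightarrow> P"
  by (metis option.exhaust surj_pair)

lemma card_Some_img[simp]: "card (Some ` X) = card X"
  by (simp add: card_image)

lemma mod_cancel_int:
  assumes "(i + k) mod (m::int) = (j + k) mod m"
  shows "i mod m = j mod m"
proof -
  have "i mod m = ((i + k) mod m + (-k)) mod m" by (simp add: mod_add_left_eq mod_diff_left_eq)
  also have "\<dots> = ((j + k) mod m + (-k)) mod m" using assms by simp
  also have "\<dots> = j mod m" by (simp add: mod_add_left_eq mod_diff_left_eq)
  finally show ?thesis .
qed

theorem theorem4p1:
  fixes G :: "('a, 'b) monoid_scheme" and n :: nat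
  assumes "group G" and "finite (carrier G)" and "n \<ge> 1"
    and "\<exists>F. starter G 2 F"
  shows "\<exists>F. starter (G \<times>\<times> integer_mod_group n) (2 * n) F"
proof -
  interpret G: group G by fact
  obtain F where st: "starter G 2 F" using assms(4) by auto
  define Z where "Z = carrier (integer_mod_group n)"
  have Z: "Z = {0..<int n}" using assms(3) by (simp add: Z_def carrier_integer_mod_group)
  have finZ: "finite Z" and cardZ: "card Z = n" and Z0: "0 \<in> Z" using assms(3) by (auto simp: Z)
  define H where "H = G \<times>\<times> integer_mod_group n"
  have grpZ: "group (integer_mod_group n)" by simp
  have grpH: "group H" unfolding H_def by (rule DirProd_group[OF assms(1) grpZ])
  have cH: "carrier H = carrier G \<times> Z" by (simp add: H_def Z_def)
  have barH: "bar H = insert None (Some ` (carrier G \<times> Z))" by (simp add: bar_def cH)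
  define F' where "F' = liftF F Z"
  from st have dv: "2 dvd order G" and fac: "is_factor 2 (bar G) F"
    and sc: "card (stab G F) = 2" and df: "carrier G - {\<one>\<^bsub>G\<^esub>} \<subseteq> diffs G F"
    unfolding starter_def by auto
  have edge: "\<And>e. e \<in> F \<Longrightarrow> \<exists>a b. a \<in> bar G \<and> b \<in> bar G \<and> a \<noteq> b \<and> e = {a, b}"
    using fac unfolding is_factor_def by blast
  have edge2: "x \<noteq> y \<and> x \<in> bar G \<and> y \<in> bar G" if h: "{x, y} \<in> F" for x y
  proof -
    obtain a b where "a \<in> bar G" "b \<in> bar G" "a \<noteq> b" "{x, y} = {a, b}" using edge[OF h] by blast
    thus ?thesis by (auto simp: doubleton_eq_iff)
  qed
  have deg: "card {u. {v, u} \<in> F} = 2" if "v \<in> bar G" for v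
  proof -
    have "\<forall>e\<in>F. \<exists>a b. e = {a, b}" using edge by blast
    from deg_eq[OF this, of v] fac that show ?thesis unfolding is_factor_def by auto
  qed
  have FbarG: "\<forall>e\<in>F. e \<subseteq> bar G" using edge by blast
  have barG: "bar G = insert None (Some ` carrier G)" by (simp add: bar_def)
  have single: "{x} \<notin> F" for x using edge2[of x x] by auto
  have adj_bar: "x \<in> bar H \<and> y \<in> bar H \<and> x \<noteq> y" if "adjL F Z x y" for x y
    using that by (cases x; cases y) (auto simp: barH barG single dest!: edge2)
  have F'barH: "\<forall>e\<in>F'. e \<subseteq> bar H" unfolding F'_def liftF_def using adj_bar by auto
  have single': "{x, x} \<notin> F" for x using single by simp
  have actH: "act H (g, k) (Some (a, i)) = Some (a \<otimes>\<^bsub>G\<^esub> g, (i + k) mod int n)" for g k a i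
    by (simp add: act_def H_def)
  have actHN: "act H h None = None" for h by (simp add: act_def)
  have actG2: "act G g ` {x, y} = {act G g x, act G g y}" for g x y by simp
  have actGS: "act G g (Some a) = Some (a \<otimes>\<^bsub>G\<^esub> g)" for g a by (simp add: act_def)
  have actGN: "act G g None = None" for g by (simp add: act_def)
  have invH: "inv\<^bsub>H\<^esub> (g, k) = (inv\<^bsub>G\<^esub> g, (- k) mod int n)" if "g \<in> carrier G" "k \<in> Z" for g k
    using that inv_DirProd[OF assms(1) grpZ, of g k] by (simp add: H_def Z_def)
  have modZ: "x mod int n \<in> Z" for x using assms(3) by (simp add: Z)
  have modne: "(i + k) mod int n \<noteq> (j + k) mod int n" if "i \<in> Z" "j \<in> Z" "i \<noteq> j" for i j k
    using that mod_cancel_int[of i k "int n" j] by (auto simp: Z)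
  have part1: "2 * n dvd order H"
  proof -
    have "order H = order G * n" by (simp add: order_def cH card_cartesian_product cardZ)
    thus ?thesis using dv by simp
  qed
  have part2a: "F' \<subseteq> {e. \<exists>a b. a \<in> bar H \<and> b \<in> bar H \<and> a \<noteq> b \<and> e = {a, b}}"
    unfolding F'_def liftF_def using adj_bar by blast
  have degH: "card {e \<in> F'. v \<in> e} = 2 * n" if v: "v \<in> bar H" for v
  proof -
    have "card {e \<in> F'. v \<in> e} = card {u. adjL F Z v u}" unfolding F'_def by (rule deg_liftF)
    also have "\<dots> = 2 * n"
    proof (cases v rule: opair_cases)
      case 1
      define A where "A = {a. {None, Some a} \<in> F}"
      have finA: "finite A" using assms(2) by (rule finite_subset[rotated]) (auto simp: A_def barG dest!: edge2)
      have e1: "{u. adjL F Z v u} = Some ` (A \<times> Z)"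
      proof (rule Set.set_eqI)
        fix u show "u \<in> {u. adjL F Z v u} \<longleftrightarrow> u \<in> Some ` (A \<times> Z)"
          by (cases u rule: opair_cases) (auto simp: 1 A_def)
      qed
      have e2: "{u. {None, u} \<in> F} = Some ` A"
      proof (rule Set.set_eqI)
        fix u show "u \<in> {u. {None, u} \<in> F} \<longleftrightarrow> u \<in> Some ` A"
          by (cases u) (auto simp: A_def single)
      qed
      have "card A = 2" using deg[of None] e2 by (simp add: barG)
      thus ?thesis using e1 finA finZ cardZ by (simp add: card_cartesian_product)
    next
      case (2 a i)
      have a: "a \<in> carrier G" and i: "i \<in> Z" using v by (auto simp: barH 2)
      define B where "B = {b. {Some a, Some b} \<in> F}"
      have finB: "finite B" using assms(2) by (rule finite_subset[rotated]) (auto simp: B_def barG dest!: edge2)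
      have aB: "a \<notin> B" using single' by (auto simp: B_def)
      show ?thesis
      proof (cases "{None, Some a} \<in> F")
        case True
        have e1: "{u. adjL F Z v u} = insert None (Some ` (B \<times> Z) \<union> Some ` ({a} \<times> (Z - {i})))"
        proof (rule Set.set_eqI)
          fix u show "u \<in> {u. adjL F Z v u} \<longleftrightarrow> u \<in> insert None (Some ` (B \<times> Z) \<union> Some ` ({a} \<times> (Z - {i})))"
            by (cases u rule: opair_cases) (auto simp: 2 B_def True i)
        qed
        have e2: "{u. {Some a, u} \<in> F} = insert None (Some ` B)"
        proof (rule Set.set_eqI)
          fix u show "u \<in> {u. {Some a, u} \<in> F} \<longleftrightarrow> u \<in> insert None (Some ` B)"
            by (cases u) (auto simp: B_def True insert_commute)
        qed
        have "card (insert None (Some ` B)) = 2" using deg[of "Some a"] e2 a by (simp add: barG)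
        hence cB: "card B = 1" using finB by (simp add: card_insert_if)
        have d: "Some ` (B \<times> Z) \<inter> Some ` ({a} \<times> (Z - {i})) = {}" using aB by auto
        have "card (Some ` (B \<times> Z) \<union> Some ` ({a} \<times> (Z - {i}))) = n + (n - 1)"
          using card_Un_disjoint[OF _ _ d] finB finZ cB cardZ i
          by (simp add: card_cartesian_product)
        thus ?thesis using e1 finB finZ assms(3) by (simp add: card_insert_if)
      next
        case False
        have e1: "{u. adjL F Z v u} = Some ` (B \<times> Z)"
        proof (rule Set.set_eqI)
          fix u show "u \<in> {u. adjL F Z v u} \<longleftrightarrow> u \<in> Some ` (B \<times> Z)"
            by (cases u rule: opair_cases) (auto simp: 2 B_def False i insert_commute)
        qed
        have e2: "{u. {Some a, u} \<in> F} = Some ` B"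
        proof (rule Set.set_eqI)
          fix u show "u \<in> {u. {Some a, u} \<in> F} \<longleftrightarrow> u \<in> Some ` B"
            by (cases u) (auto simp: B_def False insert_commute)
        qed
        have "card B = 2" using deg[of "Some a"] e2 a by (simp add: barG)
        thus ?thesis using e1 finB finZ cardZ by (simp add: card_cartesian_product)
      qed
    qed
    finally show ?thesis .
  qed
  have pres: "act H (g, k) ` e \<in> F'" if gs: "g \<in> stab G F" and k: "k \<in> Z" and e: "e \<in> F'" for g k e
  proof -
    have gF: "act G g ` e \<in> F" if "e \<in> F" for e using gs that unfolding stab_def by blast
    have gF1: "{None, Some (b \<otimes>\<^bsub>G\<^esub> g)} \<in> F" if "{None, Some b} \<in> F" for b
      using gF[OF that] by (simp add: actGS actGN)
    have gF2: "{Some (a \<otimes>\<^bsub>G\<^esub> g), Some (b \<otimes>\<^bsub>G\<^esub> g)} \<in> F" if "{Some a, Some b} \<in> F" for a b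
      using gF[OF that] by (simp add: actGS)
    obtain x y where exy: "e = {x, y}" "adjL F Z x y" using e unfolding F'_def liftF_def by blast
    have "adjL F Z (act H (g, k) x) (act H (g, k) y)"
      using exy(2)
      by (cases x rule: opair_cases; cases y rule: opair_cases)
         (auto simp: actH actHN modZ gF1 gF2 modne)
    thus ?thesis using exy(1) by (simp add: F'_def mem_liftF)
  qed
  have backF: "act G g ` e \<in> F" if gk: "(g, k) \<in> carrier H" and hs: "(\<lambda>e. act H (g, k) ` e) ` F' = F'"
    and e: "e \<in> F" for g k e
  proof -
    have img: "act H (g, k) ` e' \<in> F'" if "e' \<in> F'" for e' using hs that by blast
    obtain x y where xy: "x \<noteq> y" "e = {x, y}" using edge[OF e] by blast
    have exy: "{x, y} \<in> F" using e xy by simp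
    show ?thesis
    proof (cases x)
      case None
      then obtain b where yb: "y = Some b" using xy by (cases y) auto
      have "{None, Some (b, 0)} \<in> F'" using exy None yb Z0 by (simp add: F'_def mem_liftF)
      from img[OF this] have "adjL F Z None (Some (b \<otimes>\<^bsub>G\<^esub> g, (0 + k) mod int n))"
        by (simp add: actH actHN F'_def mem_liftF)
      thus ?thesis using xy None yb by (simp add: actGS actGN)
    next
      case (Some a)
      show ?thesis
      proof (cases y)
        case None
        have "{None, Some (a, 0)} \<in> F'" using exy None Some Z0 by (simp add: F'_def mem_liftF insert_commute)
        from img[OF this] have "adjL F Z None (Some (a \<otimes>\<^bsub>G\<^esub> g, (0 + k) mod int n))"
          by (simp add: actH actHN F'_def mem_liftF)
        thus ?thesis using xy None Some by (simp add: actGS actGN insert_commute)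
      next
        case (Some b)
        have "{Some (a, 0), Some (b, 0)} \<in> F'" using exy \<open>x = Some a\<close> Some Z0 by (simp add: F'_def mem_liftF)
        from img[OF this] have "adjL F Z (Some (a \<otimes>\<^bsub>G\<^esub> g, (0 + k) mod int n)) (Some (b \<otimes>\<^bsub>G\<^esub> g, (0 + k) mod int n))"
          by (simp add: actH F'_def mem_liftF)
        thus ?thesis using xy \<open>x = Some a\<close> Some by (simp add: actGS)
      qed
    qed
  qed
  have stabeq: "stab H F' = stab G F \<times> Z"
  proof
    show "stab H F' \<subseteq> stab G F \<times> Z"
    proof
      fix p assume p: "p \<in> stab H F'"
      obtain g k where pgk: "p = (g, k)" by (cases p)
      have gk: "g \<in> carrier G" "k \<in> Z" using p pgk by (auto simp: stab_def cH)
      have p2: "inv\<^bsub>H\<^esub> p \<in> stab H F'" by (rule stab_inv[OF grpH F'barH p])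
      have "g \<in> stab G F"
      proof (rule stabI[OF assms(1) FbarG gk(1)])
        show "\<forall>e\<in>F. act G g ` e \<in> F" using p pgk backF by (auto simp: stab_def)
        have "(inv\<^bsub>G\<^esub> g, (- k) mod int n) \<in> stab H F'" using p2 pgk invH[OF gk] by simp
        thus "\<forall>e\<in>F. act G (inv\<^bsub>G\<^esub> g) ` e \<in> F" using backF by (auto simp: stab_def)
      qed
      thus "p \<in> stab G F \<times> Z" using pgk gk by simp
    qed
  next
    show "stab G F \<times> Z \<subseteq> stab H F'"
    proof
      fix p assume p: "p \<in> stab G F \<times> Z"
      obtain g k where pgk: "p = (g, k)" by (cases p)
      have gs: "g \<in> stab G F" and k: "k \<in> Z" using p pgk by auto
      have g: "g \<in> carrier G" using gs by (simp add: stab_def)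
      have gs': "inv\<^bsub>G\<^esub> g \<in> stab G F" by (rule stab_inv[OF assms(1) FbarG gs])
      show "p \<in> stab H F'" unfolding pgk
      proof (rule stabI[OF grpH F'barH])
        show "(g, k) \<in> carrier H" using g k by (simp add: cH)
        show "\<forall>e\<in>F'. act H (g, k) ` e \<in> F'" using pres gs k by blast
        show "\<forall>e\<in>F'. act H (inv\<^bsub>H\<^esub> (g, k)) ` e \<in> F'"
          using pres[OF gs' modZ] invH[OF g k] by simp
      qed
    qed
  qed
  have part3: "card (stab H F') = 2 * n"
    using stabeq sc cardZ by (simp add: card_cartesian_product)
  have part4: "carrier H - {\<one>\<^bsub>H\<^esub>} \<subseteq> diffs H F'"
  proof
    fix p assume p: "p \<in> carrier H - {\<one>\<^bsub>H\<^esub>}"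
    obtain g k where pgk: "p = (g, k)" by (cases p)
    have g: "g \<in> carrier G" and k: "k \<in> Z" and ne: "(g, k) \<noteq> (\<one>\<^bsub>G\<^esub>, 0)"
    proof -
      have oneH: "\<one>\<^bsub>H\<^esub> = (\<one>\<^bsub>G\<^esub>, 0)" by (simp add: H_def)
      show "g \<in> carrier G" "k \<in> Z" "(g, k) \<noteq> (\<one>\<^bsub>G\<^esub>, 0)"
        using p pgk unfolding oneH cH by auto
    qed
    have kmod: "k mod int n = k" using k by (simp add: Z)
    show "p \<in> diffs H F'"
    proof (cases "g = \<one>\<^bsub>G\<^esub>")
      case False
      hence "g \<in> diffs G F" using df g by blast
      then obtain a0 b0 where ab0: "{Some a0, Some b0} \<in> F" "a0 \<noteq> b0"
          "g = a0 \<otimes>\<^bsub>G\<^esub> inv\<^bsub>G\<^esub> b0 \<or> g = b0 \<otimes>\<^bsub>G\<^esub> inv\<^bsub>G\<^esub> a0"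
        unfolding diffs_def by blast
      obtain a b where ab: "{Some a, Some b} \<in> F" "a \<noteq> b" "g = a \<otimes>\<^bsub>G\<^esub> inv\<^bsub>G\<^esub> b"
      proof (cases "g = a0 \<otimes>\<^bsub>G\<^esub> inv\<^bsub>G\<^esub> b0")
        case True thus ?thesis using that ab0 by blast
      next
        case False
        hence "g = b0 \<otimes>\<^bsub>G\<^esub> inv\<^bsub>G\<^esub> a0" using ab0 by blast
        moreover have "{Some b0, Some a0} \<in> F" using ab0 by (simp add: insert_commute)
        ultimately show ?thesis using that ab0 by blast
      qed
      have abG: "a \<in> carrier G" "b \<in> carrier G" using edge2[OF ab(1)] by (auto simp: barG)
      have mem: "{Some (a, k), Some (b, 0)} \<in> F'" using ab k Z0 by (simp add: F'_def mem_liftF)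
      have eq: "(g, k) = (a, k) \<otimes>\<^bsub>H\<^esub> inv\<^bsub>H\<^esub> (b, 0)"
        using invH[OF abG(2) Z0] ab kmod by (simp add: H_def)
      have "(a, k) \<noteq> (b, 0)" using ab(2) by simp
      thus ?thesis unfolding diffs_def pgk using mem eq by blast
    next
      case True
      hence k0: "k \<noteq> 0" using ne by simp
      have "card {u. {None, u} \<in> F} = 2" using deg[of None] by (simp add: barG)
      hence "{u. {None, u} \<in> F} \<noteq> {}" by (metis card.empty zero_neq_numeral)
      then obtain u where "{None, u} \<in> F" by blast
      then obtain a where a: "{None, Some a} \<in> F" using single' by (cases u) auto
      have aG: "a \<in> carrier G" using edge2[OF a] by (auto simp: barG)
      have mem: "{Some (a, k), Some (a, 0)} \<in> F'" using a k Z0 k0 by (simp add: F'_def mem_liftF)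
      have eq: "(g, k) = (a, k) \<otimes>\<^bsub>H\<^esub> inv\<^bsub>H\<^esub> (a, 0)"
        using invH[OF aG Z0] True kmod aG by (simp add: H_def)
      have "(a, k) \<noteq> (a, 0)" using k0 by simp
      thus ?thesis unfolding diffs_def pgk using mem eq by blast
    qed
  qed
  have "starter H (2 * n) F'"
    unfolding starter_def is_factor_def using part1 part2a degH part3 part4 by simp
  thus ?thesis unfolding H_def by blast
qed

end
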